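(* Let $H$ be a complex infinite-dimensional separable Hilbert space and let $(f_n)_{n=1}^\infty$ be a frame for $H$ with optimal upper frame bound $B$ such that the series $\sum_{n=1}^\infty(B-\|f_n\|^2)$ converges. Then $(f_n)_{n=1}^\infty$ is a near-Riesz basis.
   Context: The optimal upper frame bound of a frame is the infimum of all $B$ with $\sum_n|\langle x,f_n\rangle|^2\le B\|x\|^2$ for all $x\in H$ (note $\|f_n\|^2\le B$ for all $n$). The excess of a frame is the maximal number of elements that can be deleted so that the remaining sequence is still a frame. A near-Riesz basis is a frame with finite excess. *)

theory Defs
  imports "HOL-Analysis.Analysis"
begin

class complex_vector = real_vector +
  fixes scaleC :: "complex \<Rightarrow> 'a \<Rightarrow> 'a"
  assumes scaleC_add_right: "scaleC a (x + y) = scaleC a x + scaleC a y"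
    and scaleC_add_left: "scaleC (a + b) x = scaleC a x + scaleC b x"
    and scaleC_scaleC: "scaleC a (scaleC b x) = scaleC (a * b) x"
    and scaleC_one: "scaleC 1 x = x"
    and scaleR_scaleC: "scaleR r x = scaleC (complex_of_real r) x"

class complex_inner = complex_vector + real_normed_vector +
  fixes cinner :: "'a \<Rightarrow> 'a \<Rightarrow> complex"
  assumes cinner_commute: "cinner x y = cnj (cinner y x)"
    and cinner_add_left: "cinner (x + y) z = cinner x z + cinner y z"
    and cinner_scaleC_left: "cinner (scaleC r x) y = r * cinner x y"
    and cinner_self_real: "Im (cinner x x) = 0"
    and cinner_self_nonneg: "0 \<le> Re (cinner x x)"
    and cinner_self_eq_zero: "cinner x x = 0 \<longleftrightarrow> x = 0"
    and norm_eq_sqrt_cinner: "norm x = sqrt (Re (cinner x x))"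

definition cspan :: "'a::complex_vector set \<Rightarrow> 'a set" where
  "cspan S = {\<Sum>a\<in>T. scaleC (c a) a | T c. finite T \<and> T \<subseteq> S}"

definition infinite_dimensional :: "'a::complex_vector itself \<Rightarrow> bool" where
  "infinite_dimensional _ \<longleftrightarrow> \<not> (\<exists>S::'a set. finite S \<and> cspan S = UNIV)"

definition separable_hilbert :: "'a::topological_space itself \<Rightarrow> bool" where
  "separable_hilbert _ \<longleftrightarrow> (\<exists>D::'a set. countable D \<and> closure D = UNIV)"

definition frame_coeff_sum :: "(nat \<Rightarrow> 'a::complex_inner) \<Rightarrow> nat set \<Rightarrow> 'a \<Rightarrow> real" where
  "frame_coeff_sum f I x = (\<Sum>n. if n \<in> I then (cmod (cinner x (f n)))\<^sup>2 else 0)"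

definition frame_on :: "(nat \<Rightarrow> 'a::complex_inner) \<Rightarrow> nat set \<Rightarrow> bool" where
  "frame_on f I \<longleftrightarrow> (\<exists>A B. 0 < A \<and> (\<forall>x.
      summable (\<lambda>n. if n \<in> I then (cmod (cinner x (f n)))\<^sup>2 else 0) \<and>
      A * (norm x)\<^sup>2 \<le> frame_coeff_sum f I x \<and>
      frame_coeff_sum f I x \<le> B * (norm x)\<^sup>2))"

definition frame :: "(nat \<Rightarrow> 'a::complex_inner) \<Rightarrow> bool" where
  "frame f \<longleftrightarrow> frame_on f UNIV"

definition optimal_upper_frame_bound :: "(nat \<Rightarrow> 'a::complex_inner) \<Rightarrow> real" where
  "optimal_upper_frame_bound f =
     Inf {B. \<forall>x. frame_coeff_sum f UNIV x \<le> B * (norm x)\<^sup>2}"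

text \<open>Near-Riesz basis: a frame with finite excess, i.e. there is a finite
bound N such that whenever a set S of indices is deleted and the remaining
sequence is still a frame, S is finite with at most N elements.\<close>

definition near_riesz_basis :: "(nat \<Rightarrow> 'a::complex_inner) \<Rightarrow> bool" where
  "near_riesz_basis f \<longleftrightarrow> frame f \<and>
     (\<exists>N::nat. \<forall>S. frame_on f (UNIV - S) \<longrightarrow> finite S \<and> card S \<le> N)"

end

theory Submission
  imports Defs
begin


lemma scaleC_zero_right [simp]: "scaleC a (0::'a::complex_vector) = 0"
  using scaleC_add_right[of a "0::'a" 0] by simp

lemma scaleC_zero_left [simp]: "scaleC 0 (x::'a::complex_vector) = 0"
  using scaleC_add_left[of 0 0 x] by simp

lemma scaleC_minus_right: "scaleC a (- (x::'a::complex_vector)) = - scaleC a x"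
  using scaleC_add_right[of a x "-x"] by (simp add: eq_neg_iff_add_eq_0 add.commute)

lemma scaleC_diff_right: "scaleC a ((x::'a::complex_vector) - y) = scaleC a x - scaleC a y"
  using scaleC_add_right[of a x "-y"] by (simp add: scaleC_minus_right)

lemma scaleC_minus_left: "scaleC (- a) (x::'a::complex_vector) = - scaleC a x"
  using scaleC_add_left[of a "-a" x] by (simp add: eq_neg_iff_add_eq_0 add.commute)

lemma scaleC_diff_left: "scaleC (a - b) (x::'a::complex_vector) = scaleC a x - scaleC b x"
  using scaleC_add_left[of a "-b" x] by (simp add: scaleC_minus_left)

lemma scaleC_sum_right: "scaleC a (\<Sum>i\<in>A. g i) = (\<Sum>i\<in>A. scaleC a (g i::'a::complex_vector))"
  by (induction A rule: infinite_finite_induct) (auto simp: scaleC_add_right)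

lemma scaleC_sum_left: "scaleC (\<Sum>i\<in>A. c i) (x::'a::complex_vector) = (\<Sum>i\<in>A. scaleC (c i) x)"
  by (induction A rule: infinite_finite_induct) (auto simp: scaleC_add_left)

lemma cinner_zero_left [simp]: "cinner 0 (y::'a::complex_inner) = 0"
  using cinner_add_left[of "0::'a" 0 y] by simp

lemma cinner_add_right: "cinner (x::'a::complex_inner) (y + z) = cinner x y + cinner x z"
  by (metis cinner_add_left cinner_commute complex_cnj_add)

lemma cinner_zero_right [simp]: "cinner (x::'a::complex_inner) 0 = 0"
  using cinner_add_right[of x "0::'a" 0] by simp

lemma cinner_scaleC_right: "cinner (x::'a::complex_inner) (scaleC r y) = cnj r * cinner x y"
  by (metis cinner_commute cinner_scaleC_left complex_cnj_cnj complex_cnj_mult)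

lemma cinner_minus_left: "cinner (- x::'a::complex_inner) y = - cinner x y"
  using cinner_add_left[of x "-x" y] by (simp add: eq_neg_iff_add_eq_0 add.commute)

lemma cinner_minus_right: "cinner (x::'a::complex_inner) (- y) = - cinner x y"
  using cinner_add_right[of x y "-y"] by (simp add: eq_neg_iff_add_eq_0 add.commute)

lemma cinner_diff_left: "cinner ((x::'a::complex_inner) - y) z = cinner x z - cinner y z"
  using cinner_add_left[of x "-y" z] by (simp add: cinner_minus_left)

lemma cinner_diff_right: "cinner (x::'a::complex_inner) (y - z) = cinner x y - cinner x z"
  using cinner_add_right[of x y "-z"] by (simp add: cinner_minus_right)

lemma cinner_sum_left: "cinner (\<Sum>i\<in>A. g i) (z::'a::complex_inner) = (\<Sum>i\<in>A. cinner (g i) z)"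
  by (induction A rule: infinite_finite_induct) (auto simp: cinner_add_left)

lemma cinner_sum_right: "cinner (z::'a::complex_inner) (\<Sum>i\<in>A. g i) = (\<Sum>i\<in>A. cinner z (g i))"
  by (induction A rule: infinite_finite_induct) (auto simp: cinner_add_right)

lemma power2_norm_Re: "(norm (x::'a::complex_inner))\<^sup>2 = Re (cinner x x)"
  by (simp add: norm_eq_sqrt_cinner cinner_self_nonneg)

lemma cinner_self_norm: "cinner (x::'a::complex_inner) x = complex_of_real ((norm x)\<^sup>2)"
  by (simp add: power2_norm_Re complex_eq_iff cinner_self_real)

lemma norm_scaleC: "norm (scaleC c (x::'a::complex_inner)) = cmod c * norm x"
proof -
  have "cinner (scaleC c x) (scaleC c x) = (c * cnj c) * cinner x x"
    by (simp add: cinner_scaleC_left cinner_scaleC_right mult.assoc)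
  also have "\<dots> = complex_of_real ((cmod c)\<^sup>2) * complex_of_real ((norm x)\<^sup>2)"
    by (simp only: complex_norm_square[symmetric] cinner_self_norm)
  also have "\<dots> = complex_of_real ((cmod c)\<^sup>2 * (norm x)\<^sup>2)"
    by (rule of_real_mult[symmetric])
  finally have "Re (cinner (scaleC c x) (scaleC c x)) = (cmod c)\<^sup>2 * (norm x)\<^sup>2"
    by (simp only: Re_complex_of_real)
  hence "(norm (scaleC c x))\<^sup>2 = (cmod c * norm x)\<^sup>2"
    by (simp only: power2_norm_Re[of "scaleC c x"] power_mult_distrib)
  then show ?thesis by (simp add: power2_eq_iff_nonneg)
qed

lemma Re_cinner_commute: "Re (cinner (y::'a::complex_inner) x) = Re (cinner x y)"
  by (subst cinner_commute) simp

lemma norm_diff_sq: "(norm ((x::'a::complex_inner) - y))\<^sup>2 = (norm x)\<^sup>2 - 2 * Re (cinner x y) + (norm y)\<^sup>2"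
  by (simp add: power2_norm_Re cinner_diff_left cinner_diff_right Re_cinner_commute[of y x])

lemma norm_add_sq: "(norm ((x::'a::complex_inner) + y))\<^sup>2 = (norm x)\<^sup>2 + 2 * Re (cinner x y) + (norm y)\<^sup>2"
  by (simp add: power2_norm_Re cinner_add_left cinner_add_right Re_cinner_commute[of y x])

lemma parallelogram: "(norm ((x::'a::complex_inner) + y))\<^sup>2 + (norm (x - y))\<^sup>2 = 2 * (norm x)\<^sup>2 + 2 * (norm y)\<^sup>2"
  by (simp add: norm_add_sq norm_diff_sq)


definition comb :: "(nat \<Rightarrow> 'a::complex_vector) \<Rightarrow> (nat \<Rightarrow> complex) \<Rightarrow> nat set \<Rightarrow> 'a" where
  "comb f a F = (\<Sum>n\<in>F. scaleC (a n) (f n))"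

lemma coeff_UNIV: "frame_coeff_sum f UNIV x = (\<Sum>n. (cmod (cinner x (f n)))\<^sup>2)"
  by (simp add: frame_coeff_sum_def)

lemma frame_summable: "frame f \<Longrightarrow> summable (\<lambda>n. (cmod (cinner x (f n)))\<^sup>2)"
  unfolding frame_def frame_on_def by auto

lemma B_upper:
  assumes "frame f" "B = optimal_upper_frame_bound f"
  shows "frame_coeff_sum f UNIV x \<le> B * (norm x)\<^sup>2"
proof -
  define U where "U = {B. \<forall>x. frame_coeff_sum f UNIV x \<le> B * (norm x)\<^sup>2}"
  from assms(1) obtain B0 where "B0 \<in> U" unfolding frame_def frame_on_def U_def by blast
  hence Une: "U \<noteq> {}" by auto
  show ?thesis
  proof (cases "x = 0")
    case True then show ?thesis by (simp add: coeff_UNIV)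
  next
    case False
    hence np: "0 < (norm x)\<^sup>2" by simp
    have "frame_coeff_sum f UNIV x / (norm x)\<^sup>2 \<le> Inf U"
    proof (rule cInf_greatest[OF Une])
      fix b assume "b \<in> U"
      hence "frame_coeff_sum f UNIV x \<le> b * (norm x)\<^sup>2" unfolding U_def by blast
      thus "frame_coeff_sum f UNIV x / (norm x)\<^sup>2 \<le> b" using np by (simp add: divide_le_eq)
    qed
    moreover have "Inf U = B" using assms(2) unfolding optimal_upper_frame_bound_def U_def by simp
    ultimately show ?thesis using np by (simp add: divide_le_eq)
  qed
qed

lemma B_pos:
  fixes f :: "nat \<Rightarrow> 'a::complex_inner"
  assumes "frame f" "B = optimal_upper_frame_bound f" "(x::'a::complex_inner) \<noteq> 0"
  shows "0 < B"
proof -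
  from assms(1) obtain A where A: "0 < A" "\<And>x. A * (norm x)\<^sup>2 \<le> frame_coeff_sum f UNIV x"
    unfolding frame_def frame_on_def by blast
  have "A * (norm x)\<^sup>2 \<le> B * (norm x)\<^sup>2" using A(2)[of x] B_upper[OF assms(1,2), of x] by linarith
  moreover have "0 < (norm x)\<^sup>2" using assms(3) by simp
  ultimately have "A \<le> B" by (metis mult_le_cancel_right_pos)
  thus ?thesis using A(1) by linarith
qed

lemma cmod_cinner_self: "cmod (cinner (x::'a::complex_inner) x) = (norm x)\<^sup>2"
  by (simp only: cinner_self_norm norm_of_real) simp

lemma row_bound:
  assumes "frame f" "B = optimal_upper_frame_bound f" "finite F"
  shows "(norm (f n))\<^sup>2 * (norm (f n))\<^sup>2 + (\<Sum>m\<in>F-{n}. (cmod (cinner (f n) (f m)))\<^sup>2) \<le> B * (norm (f n))\<^sup>2"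
proof -
  let ?g = "\<lambda>m. (cmod (cinner (f n) (f m)))\<^sup>2"
  have s: "summable ?g" using frame_summable[OF assms(1)] .
  have "(\<Sum>m\<in>insert n (F-{n}). ?g m) \<le> (\<Sum>m. ?g m)"
    by (rule sum_le_suminf[OF s]) (use assms(3) in auto)
  also have "\<dots> \<le> B * (norm (f n))\<^sup>2" using B_upper[OF assms(1,2)] by (simp add: coeff_UNIV)
  moreover have "(\<Sum>m\<in>insert n (F-{n}). ?g m) = ?g n + (\<Sum>m\<in>F-{n}. ?g m)"
    using assms(3) by (subst sum.insert) auto
  ultimately show ?thesis by (simp add: cmod_cinner_self power2_eq_square)
qed

lemma norm_le_B:
  assumes "frame f" "B = optimal_upper_frame_bound f" "0 \<le> B"
  shows "(norm (f n))\<^sup>2 \<le> B"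
proof -
  have "(norm (f n))\<^sup>2 * (norm (f n))\<^sup>2 \<le> B * (norm (f n))\<^sup>2"
    using row_bound[OF assms(1,2), of "{}" n] by simp
  thus ?thesis
  proof (cases "f n = 0")
    case False
    hence "0 < (norm (f n))\<^sup>2" by simp
    thus ?thesis using \<open>(norm (f n))\<^sup>2 * (norm (f n))\<^sup>2 \<le> B * (norm (f n))\<^sup>2\<close>
      by (metis mult.commute mult_le_cancel_left_pos)
  qed (use assms(3) in simp)
qed



lemma cs_sqrt:
  fixes a b :: "'i \<Rightarrow> real"
  shows "(\<Sum>i\<in>I. a i * b i) \<le> sqrt (\<Sum>i\<in>I. (a i)\<^sup>2) * sqrt (\<Sum>i\<in>I. (b i)\<^sup>2)"
proof -
  have "(\<Sum>i\<in>I. a i * b i) \<le> sqrt ((\<Sum>i\<in>I. (a i)\<^sup>2) * (\<Sum>i\<in>I. (b i)\<^sup>2))"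
    by (rule real_le_rsqrt) (rule Cauchy_Schwarz_ineq_sum)
  thus ?thesis by (simp add: real_sqrt_mult)
qed

lemma cinner_comb:
  "cinner (comb f w F) (comb f w F) = (\<Sum>n\<in>F. \<Sum>m\<in>F. w n * cnj (w m) * cinner (f n) (f m))"
  unfolding comb_def
  apply (simp add: cinner_sum_left cinner_sum_right cinner_scaleC_left cinner_scaleC_right
      sum_distrib_left mult.assoc)
  apply (subst sum.swap)
  apply (simp add: ac_simps)
  done

lemma lower_comb:
  fixes f :: "nat \<Rightarrow> 'a::complex_inner"
  assumes fr: "frame f" and Bd: "B = optimal_upper_frame_bound f" and B0: "0 \<le> B"
    and F: "finite F" and eta: "(\<Sum>n\<in>F. B - (norm (f n))\<^sup>2) \<le> \<eta>"
  shows "(B - \<eta> - sqrt (B * \<eta>)) * (\<Sum>n\<in>F. (cmod (w n))\<^sup>2) \<le> (norm (comb f w F))\<^sup>2"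
proof -
  define G where "G n m = cinner (f n) (f m)" for n m
  define W2 where "W2 = (\<Sum>n\<in>F. (cmod (w n))\<^sup>2)"
  define q where "q n = B - (norm (f n))\<^sup>2" for n
  have q0: "0 \<le> q n" for n using norm_le_B[OF fr Bd B0, of n] by (simp add: q_def)
  have W20: "0 \<le> W2" by (simp add: W2_def sum_nonneg)
  have eta0: "0 \<le> \<eta>" using eta q0 sum_nonneg[of F q] by (simp add: q_def)
  have qle: "q n \<le> \<eta>" if "n \<in> F" for n
    using member_le_sum[of n F q] q0 F that eta by (simp add: q_def)
  define off where "off = (\<Sum>n\<in>F. \<Sum>m\<in>F-{n}. w n * cnj (w m) * G n m)"
  define D where "D = (\<Sum>n\<in>F. (cmod (w n))\<^sup>2 * (norm (f n))\<^sup>2)"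
  have split: "(\<Sum>m\<in>F. w n * cnj (w m) * G n m) =
      complex_of_real ((cmod (w n))\<^sup>2 * (norm (f n))\<^sup>2) + (\<Sum>m\<in>F-{n}. w n * cnj (w m) * G n m)"
    if "n \<in> F" for n
  proof -
    have "(\<Sum>m\<in>F. w n * cnj (w m) * G n m) = w n * cnj (w n) * G n n + (\<Sum>m\<in>F-{n}. w n * cnj (w m) * G n m)"
      using F that by (simp add: sum.remove)
    moreover have "w n * cnj (w n) * G n n = complex_of_real ((cmod (w n))\<^sup>2 * (norm (f n))\<^sup>2)"
      by (simp add: G_def cinner_self_norm complex_norm_square[symmetric] del: of_real_power)
    ultimately show ?thesis by simp
  qed
  have ci: "cinner (comb f w F) (comb f w F) = complex_of_real D + off"
    unfolding cinner_comb D_def off_def G_def[symmetric]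
    by (simp add: split sum.distrib)
  have nsq: "(norm (comb f w F))\<^sup>2 = D + Re off"
    by (simp add: power2_norm_Re ci)
  have "cmod off \<le> (\<Sum>n\<in>F. \<Sum>m\<in>F-{n}. cmod (w n) * (cmod (w m) * cmod (G n m)))"
    unfolding off_def
    by (rule order_trans[OF norm_sum], rule sum_mono, rule order_trans[OF norm_sum])
       (simp add: norm_mult mult.assoc)
  also have "\<dots> = (\<Sum>n\<in>F. cmod (w n) * (\<Sum>m\<in>F-{n}. cmod (w m) * cmod (G n m)))"
    by (simp add: sum_distrib_left)
  also have "\<dots> \<le> (\<Sum>n\<in>F. cmod (w n) * (sqrt W2 * sqrt (B * q n)))"
  proof (rule sum_mono, rule mult_left_mono)
    fix n assume n: "n \<in> F"
    have "(\<Sum>m\<in>F-{n}. cmod (w m) * cmod (G n m))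
        \<le> sqrt (\<Sum>m\<in>F-{n}. (cmod (w m))\<^sup>2) * sqrt (\<Sum>m\<in>F-{n}. (cmod (G n m))\<^sup>2)"
      by (rule cs_sqrt)
    also have "\<dots> \<le> sqrt W2 * sqrt (B * q n)"
    proof (rule mult_mono)
      show "sqrt (\<Sum>m\<in>F-{n}. (cmod (w m))\<^sup>2) \<le> sqrt W2"
        unfolding W2_def by (rule real_sqrt_le_mono, rule sum_mono2) (use F in auto)
      have rb: "(norm (f n))\<^sup>2 * (norm (f n))\<^sup>2 + (\<Sum>m\<in>F-{n}. (cmod (G n m))\<^sup>2) \<le> B * (norm (f n))\<^sup>2"
        using row_bound[OF fr Bd F, of n] by (simp add: G_def)
      have "(\<Sum>m\<in>F-{n}. (cmod (G n m))\<^sup>2) \<le> (norm (f n))\<^sup>2 * q n"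
        using rb by (simp add: q_def algebra_simps)
      also have "\<dots> \<le> B * q n"
        by (rule mult_right_mono[OF norm_le_B[OF fr Bd B0] q0])
      finally show "sqrt (\<Sum>m\<in>F-{n}. (cmod (G n m))\<^sup>2) \<le> sqrt (B * q n)"
        by (rule real_sqrt_le_mono)
    qed (auto simp: W20 sum_nonneg)
    finally show "(\<Sum>m\<in>F-{n}. cmod (w m) * cmod (G n m)) \<le> sqrt W2 * sqrt (B * q n)" .
  qed simp
  also have "\<dots> = sqrt W2 * sqrt B * (\<Sum>n\<in>F. cmod (w n) * sqrt (q n))"
    by (simp add: sum_distrib_left real_sqrt_mult algebra_simps)
  also have "\<dots> \<le> sqrt W2 * sqrt B * (sqrt W2 * sqrt (\<Sum>n\<in>F. q n))"
  proof (rule mult_left_mono)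
    have "(\<Sum>n\<in>F. cmod (w n) * sqrt (q n)) \<le> sqrt (\<Sum>n\<in>F. (cmod (w n))\<^sup>2) * sqrt (\<Sum>n\<in>F. (sqrt (q n))\<^sup>2)"
      by (rule cs_sqrt)
    thus "(\<Sum>n\<in>F. cmod (w n) * sqrt (q n)) \<le> sqrt W2 * sqrt (\<Sum>n\<in>F. q n)"
      using q0 by (simp add: W2_def)
  qed (simp add: W20 B0)
  also have "\<dots> \<le> sqrt W2 * sqrt B * (sqrt W2 * sqrt \<eta>)"
    using eta W20 B0 by (intro mult_left_mono real_sqrt_le_mono) (auto simp: q_def)
  also have "\<dots> = W2 * sqrt (B * \<eta>)"
    using W20 by (simp add: real_sqrt_mult algebra_simps)
  finally have offb: "cmod off \<le> W2 * sqrt (B * \<eta>)" .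
  have "D = (\<Sum>n\<in>F. (cmod (w n))\<^sup>2 * (B - q n))" by (simp add: D_def q_def)
  also have "\<dots> \<ge> (\<Sum>n\<in>F. (cmod (w n))\<^sup>2 * (B - \<eta>))"
    by (rule sum_mono, rule mult_left_mono) (use qle in auto)
  finally have Db: "(B - \<eta>) * W2 \<le> D" by (simp add: W2_def sum_distrib_left mult.commute)
  have "- cmod off \<le> Re off" using abs_Re_le_cmod[of off] by linarith
  thus ?thesis using nsq offb Db by (simp add: W2_def[symmetric] algebra_simps)
qed



lemma comb_extend:
  assumes "finite F'" "F \<subseteq> F'"
  shows "comb f a F = comb f (\<lambda>n. if n \<in> F then a n else 0) F'"
  unfolding comb_def
  by (rule sum.mono_neutral_cong_left) (use assms in auto)

lemma comb_add_coef: "comb f a F + comb f b F = comb f (\<lambda>n. a n + b n) F"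
  unfolding comb_def by (simp add: scaleC_add_left sum.distrib)

lemma comb_diff_coef: "comb f a F - comb f b F = comb f (\<lambda>n. a n - b n) F"
  unfolding comb_def by (simp add: scaleC_diff_left sum_subtractf)

lemma comb_add:
  assumes "finite F1" "finite F2"
  shows "comb f a1 F1 + comb f a2 F2 =
    comb f (\<lambda>n. (if n \<in> F1 then a1 n else 0) + (if n \<in> F2 then a2 n else 0)) (F1 \<union> F2)"
  using comb_extend[of "F1 \<union> F2" F1 f a1] comb_extend[of "F1 \<union> F2" F2 f a2] assms
  by (simp add: comb_add_coef)

lemma comb_scale: "scaleC c (comb f a F) = comb f (\<lambda>n. c * a n) F"
  unfolding comb_def by (simp add: scaleC_sum_right scaleC_scaleC)

lemma density:
  fixes f :: "nat \<Rightarrow> 'a::{complex_inner, complete_space}"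
  assumes fr: "frame_on f (UNIV - S)" and dpos: "0 < \<delta>"
  shows "\<exists>a F. finite F \<and> F \<inter> S = {} \<and> norm (y - comb f a F) < \<delta>"
proof (rule ccontr)
  assume "\<not> ?thesis"
  hence far: "\<delta> \<le> norm (y - comb f a F)" if "finite F" "F \<inter> S = {}" for a F
    using that by (meson not_le)
  define M where "M = {comb f a F | a F. finite F \<and> F \<inter> S = {}}"
  have Madd: "u + v \<in> M" if "u \<in> M" "v \<in> M" for u v
  proof -
    from that obtain a1 F1 a2 F2 where "u = comb f a1 F1" "finite F1" "F1 \<inter> S = {}"
      "v = comb f a2 F2" "finite F2" "F2 \<inter> S = {}" unfolding M_def by blast
    thus ?thesis unfolding M_def using comb_add[of F1 F2 f a1 a2] by blast
  qed
  have Mscale: "scaleC c u \<in> M" if "u \<in> M" for u c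
    using that unfolding M_def by (auto simp: comb_scale) blast
  have M0: "0 \<in> M" unfolding M_def by (rule CollectI, rule exI[of _ "\<lambda>_. 0"], rule exI[of _ "{}"]) (simp add: comb_def)
  have Mf: "scaleC t (f n) \<in> M" if "n \<notin> S" for n t
    unfolding M_def using that by (auto intro!: exI[of _ "\<lambda>_. t"] exI[of _ "{n}"] simp: comb_def)
  have Mfar: "\<delta>\<^sup>2 \<le> (norm (y - u))\<^sup>2" if "u \<in> M" for u
    using that far dpos unfolding M_def by (auto intro!: power_mono)
  define X where "X = {(norm (y - u))\<^sup>2 | u. u \<in> M}"
  define d2 where "d2 = Inf X"
  have Xne: "X \<noteq> {}" using M0 unfolding X_def by blast
  have Xbdd: "bdd_below X" unfolding X_def by (rule bdd_belowI[of _ 0]) auto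
  have lower: "d2 \<le> (norm (y - u))\<^sup>2" if "u \<in> M" for u
    unfolding d2_def by (rule cInf_lower[OF _ Xbdd]) (use that in \<open>auto simp: X_def\<close>)
  have d2ge: "\<delta>\<^sup>2 \<le> d2"
    unfolding d2_def by (rule cInf_greatest[OF Xne]) (auto simp: X_def Mfar)
  have "\<forall>j. \<exists>u. u \<in> M \<and> (norm (y - u))\<^sup>2 < d2 + inverse (real (Suc j))"
  proof
    fix j
    have "Inf X < d2 + inverse (real (Suc j))" unfolding d2_def by simp
    from cInf_lessD[OF Xne this] show "\<exists>u. u \<in> M \<and> (norm (y - u))\<^sup>2 < d2 + inverse (real (Suc j))"
      unfolding X_def by blast
  qed
  then obtain z where zM: "\<And>j. z j \<in> M" and zb: "\<And>j. (norm (y - z j))\<^sup>2 < d2 + inverse (real (Suc j))"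
    by metis
  have cb: "(norm (z i - z j))\<^sup>2 \<le> 2 * inverse (real (Suc i)) + 2 * inverse (real (Suc j))" for i j
  proof -
    define m where "m = scaleR (1/2) (z i + z j)"
    have mM: "m \<in> M" unfolding m_def scaleR_scaleC by (intro Mscale Madd zM)
    have e1: "(y - z i) + (y - z j) = scaleR 2 (y - m)"
      unfolding m_def by (simp add: algebra_simps scaleR_add_right scaleR_2)
    have e2: "(y - z i) - (y - z j) = - (z i - z j)" by simp
    have "(norm (scaleR 2 (y - m)))\<^sup>2 = 4 * (norm (y - m))\<^sup>2"
      by (simp add: power_mult_distrib)
    moreover have "d2 \<le> (norm (y - m))\<^sup>2" using lower[OF mM] .
    moreover have "(norm ((y - z i) + (y - z j)))\<^sup>2 + (norm ((y - z i) - (y - z j)))\<^sup>2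
        = 2 * (norm (y - z i))\<^sup>2 + 2 * (norm (y - z j))\<^sup>2" by (rule parallelogram)
    ultimately show ?thesis using zb[of i] zb[of j] unfolding e1 e2 norm_minus_cancel by linarith
  qed
  have "Cauchy z"
  proof (rule metric_CauchyI)
    fix e :: real assume e: "0 < e"
    obtain N where N: "4 / e\<^sup>2 < real N" using reals_Archimedean2 by blast
    have "\<forall>m\<ge>N. \<forall>n\<ge>N. dist (z m) (z n) < e"
    proof (intro allI impI)
      fix m n assume mn: "N \<le> m" "N \<le> n"
      have im: "inverse (real (Suc m)) \<le> inverse (real (Suc N))" using mn
        by (intro le_imp_inverse_le) auto
      have iN: "inverse (real (Suc n)) \<le> inverse (real (Suc N))" using mn
        by (intro le_imp_inverse_le) auto
      have "4 * inverse (real (Suc N)) < e\<^sup>2"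
      proof -
        have e2: "0 < e\<^sup>2" using e by simp
        have "4 < real N * e\<^sup>2" using N e2 by (simp add: field_simps)
        hence "4 < e\<^sup>2 + real N * e\<^sup>2" using e2 by linarith
        thus ?thesis using e2 by (simp add: field_simps)
      qed
      hence "(norm (z m - z n))\<^sup>2 < e\<^sup>2" using cb[of m n] im iN by linarith
      hence "norm (z m - z n) < e" using e by (simp add: power_less_imp_less_base)
      thus "dist (z m) (z n) < e" by (simp add: dist_norm)
    qed
    thus "\<exists>N. \<forall>m\<ge>N. \<forall>n\<ge>N. dist (z m) (z n) < e" by blast
  qed
  then obtain zs where zl: "z \<longlonglongrightarrow> zs" using Cauchy_convergent_iff convergent_def by blast
  define r where "r = y - zs"
  have rle: "(norm r)\<^sup>2 \<le> d2"
  proof (rule LIMSEQ_le)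
    show "(\<lambda>j. (norm (y - z j))\<^sup>2) \<longlonglongrightarrow> (norm r)\<^sup>2" unfolding r_def
      by (intro tendsto_intros zl)
    show "(\<lambda>j. d2 + inverse (real (Suc j))) \<longlonglongrightarrow> d2"
      using tendsto_add[OF tendsto_const LIMSEQ_inverse_real_of_nat, of d2] by simp
    show "\<exists>N. \<forall>n\<ge>N. (norm (y - z n))\<^sup>2 \<le> d2 + inverse (real (Suc n))"
      using zb less_imp_le by blast
  qed
  have rge: "d2 \<le> (norm (r - scaleC t (f n)))\<^sup>2" if "n \<notin> S" for n t
  proof (rule LIMSEQ_le_const)
    show "(\<lambda>j. (norm (y - (z j + scaleC t (f n))))\<^sup>2) \<longlonglongrightarrow> (norm (r - scaleC t (f n)))\<^sup>2"
    proof -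
      have "(\<lambda>j. y - (z j + scaleC t (f n))) \<longlonglongrightarrow> y - (zs + scaleC t (f n))"
        by (intro tendsto_intros zl)
      hence "(\<lambda>j. (norm (y - (z j + scaleC t (f n))))\<^sup>2) \<longlonglongrightarrow> (norm (y - (zs + scaleC t (f n))))\<^sup>2"
        by (intro tendsto_power tendsto_norm)
      moreover have "y - (zs + scaleC t (f n)) = r - scaleC t (f n)" by (simp add: r_def)
      ultimately show ?thesis by simp
    qed
    show "\<exists>N. \<forall>j\<ge>N. d2 \<le> (norm (y - (z j + scaleC t (f n))))\<^sup>2"
      using lower Madd zM Mf[OF that] by blast
  qed
  have orth: "cinner r (f n) = 0" if "n \<notin> S" for n
  proof -
    define c where "c = cinner r (f n)"
    define s where "s = 1 / ((norm (f n))\<^sup>2 + 1)"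
    have p: "0 < (norm (f n))\<^sup>2 + 1" by (simp add: add_nonneg_pos)
    have s0: "0 < s" using p by (simp add: s_def)
    have s1: "s * (norm (f n))\<^sup>2 < 1" using p by (simp add: s_def field_simps)
    define t where "t = complex_of_real s * c"
    have "cinner r (scaleC t (f n)) = complex_of_real (s * (cmod c)\<^sup>2)"
    proof -
      have "cnj c * c = complex_of_real ((cmod c)\<^sup>2)" by (simp add: complex_norm_square mult.commute del: of_real_power)
      thus ?thesis by (simp add: cinner_scaleC_right t_def c_def[symmetric] mult.assoc del: of_real_power)
    qed
    hence "(norm (r - scaleC t (f n)))\<^sup>2 = (norm r)\<^sup>2 - 2 * (s * (cmod c)\<^sup>2) + (s * cmod c)\<^sup>2 * (norm (f n))\<^sup>2"
      by (simp add: norm_diff_sq norm_scaleC t_def abs_of_pos s0 norm_mult power_mult_distrib)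
    hence "d2 \<le> (norm r)\<^sup>2 - 2 * (s * (cmod c)\<^sup>2) + (s * cmod c)\<^sup>2 * (norm (f n))\<^sup>2"
      using rge[OF that, of t] by simp
    hence "2 * (s * (cmod c)\<^sup>2) \<le> s * (cmod c)\<^sup>2 * (s * (norm (f n))\<^sup>2)"
      using rle by (simp add: power_mult_distrib power2_eq_square algebra_simps)
    also have "\<dots> \<le> s * (cmod c)\<^sup>2 * 1"
      using s1 s0 by (intro mult_left_mono) auto
    finally have "s * (cmod c)\<^sup>2 \<le> 0" by simp
    hence "(cmod c)\<^sup>2 \<le> 0" using s0 by (simp add: mult_le_0_iff)
    thus ?thesis by (simp add: c_def)
  qed
  from fr obtain A where A: "0 < A" "A * (norm r)\<^sup>2 \<le> frame_coeff_sum f (UNIV - S) r"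
    unfolding frame_on_def by blast
  have "frame_coeff_sum f (UNIV - S) r = 0"
  proof -
    have "(\<lambda>n. if n \<in> UNIV - S then (cmod (cinner r (f n)))\<^sup>2 else 0) = (\<lambda>_. 0)"
      using orth by auto
    thus ?thesis unfolding frame_coeff_sum_def by simp
  qed
  hence "norm r = 0" using A by (simp add: zero_less_mult_iff mult_le_0_iff)
  moreover have "d2 \<le> (norm r)\<^sup>2"
  proof (rule LIMSEQ_le_const)
    show "(\<lambda>j. (norm (y - z j))\<^sup>2) \<longlonglongrightarrow> (norm r)\<^sup>2" unfolding r_def
      by (intro tendsto_intros zl)
    show "\<exists>N. \<forall>j\<ge>N. d2 \<le> (norm (y - z j))\<^sup>2" using lower zM by blast
  qed
  moreover have "0 < \<delta>\<^sup>2" using dpos by simp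
  ultimately show False using d2ge by simp
qed



lemma lin_dep:
  fixes g :: "nat \<Rightarrow> nat \<Rightarrow> complex"
  assumes "finite J" "finite T" "card J < card T"
  shows "\<exists>l. (\<exists>m\<in>T. l m \<noteq> 0) \<and> (\<forall>i\<in>J. (\<Sum>m\<in>T. l m * g m i) = 0)"
  using assms
proof (induction J arbitrary: T g rule: finite_induct)
  case empty
  then obtain m where "m \<in> T" by fastforce
  thus ?case by (intro exI[of _ "\<lambda>_. 1"]) auto
next
  case (insert j J)
  show ?case
  proof (cases "\<forall>m\<in>T. g m j = 0")
    case True
    from insert.IH[of T g] insert.prems insert.hyps obtain l where
      l: "\<exists>m\<in>T. l m \<noteq> 0" "\<forall>i\<in>J. (\<Sum>m\<in>T. l m * g m i) = 0" by auto
    thus ?thesis using True by (intro exI[of _ l]) auto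
  next
    case False
    then obtain m0 where m0: "m0 \<in> T" "g m0 j \<noteq> 0" by blast
    define T' where "T' = T - {m0}"
    define g' where "g' m i = g m i - (g m j / g m0 j) * g m0 i" for m i
    have cT': "card J < card T'" using insert.prems insert.hyps m0 by (simp add: T'_def)
    from insert.IH[of T' g'] cT' insert.prems obtain mu where
      mu: "\<exists>m\<in>T'. mu m \<noteq> 0" "\<forall>i\<in>J. (\<Sum>m\<in>T'. mu m * g' m i) = 0" by (auto simp: T'_def)
    define l where "l m = (if m = m0 then - (\<Sum>m\<in>T'. mu m * g m j) / g m0 j else mu m)" for m
    have key: "(\<Sum>m\<in>T. l m * g m i) = (\<Sum>m\<in>T'. mu m * g' m i)" for i
    proof -
      have "(\<Sum>m\<in>T. l m * g m i) = l m0 * g m0 i + (\<Sum>m\<in>T'. l m * g m i)"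
        using m0 insert.prems by (simp add: T'_def sum.remove)
      also have "(\<Sum>m\<in>T'. l m * g m i) = (\<Sum>m\<in>T'. mu m * g m i)"
        by (rule sum.cong) (auto simp: l_def T'_def)
      also have "(\<Sum>m\<in>T'. mu m * g' m i) = (\<Sum>m\<in>T'. mu m * g m i) - (\<Sum>m\<in>T'. mu m * g m j) * (g m0 i / g m0 j)"
      proof -
        have A: "mu m * g' m i = mu m * g m i - (mu m * g m j) * (g m0 i / g m0 j)" for m
          by (simp add: g'_def algebra_simps)
        show ?thesis by (simp only: A sum_subtractf sum_distrib_right)
      qed
      moreover have l0: "l m0 = - (\<Sum>m\<in>T'. mu m * g m j) / g m0 j" by (simp add: l_def)
      ultimately show ?thesis unfolding l0 by (simp add: algebra_simps) (metis add_right_cancel)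
    qed
    have "\<forall>i\<in>insert j J. (\<Sum>m\<in>T. l m * g m i) = 0"
    proof
      fix i assume "i \<in> insert j J"
      moreover have "(\<Sum>m\<in>T'. mu m * g' m j) = 0" using m0 by (simp add: g'_def)
      ultimately show "(\<Sum>m\<in>T. l m * g m i) = 0" using mu(2) key by auto
    qed
    moreover have "\<exists>m\<in>T. l m \<noteq> 0" using mu(1) by (auto simp: l_def T'_def)
    ultimately show ?thesis by blast
  qed
qed



lemma key:
  fixes f :: "nat \<Rightarrow> 'a::{complex_inner, complete_space}"
  assumes c0: "0 < c"
    and lowN: "\<And>F w. finite F \<Longrightarrow> F \<subseteq> {N..} \<Longrightarrow> c * (\<Sum>n\<in>F. (cmod (w n))\<^sup>2) \<le> (norm (comb f w F))\<^sup>2"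
    and fr: "frame_on f (UNIV - S)"
    and T: "finite T" "T \<subseteq> S" "T \<subseteq> {N..}"
  shows "card T \<le> N"
proof (rule ccontr)
  assume "\<not> card T \<le> N"
  hence cT: "N < card T" by simp
  define k where "k = card T"
  have k0: "0 < real k" using cT by (simp add: k_def)
  define \<delta> where "\<delta> = sqrt (c / (2 * real k))"
  have d0: "0 < \<delta>" using c0 k0 by (simp add: \<delta>_def)
  have dsq: "\<delta>\<^sup>2 * real k = c / 2" using c0 k0 by (simp add: \<delta>_def)
  have "\<forall>m\<in>T. \<exists>aF. finite (snd aF) \<and> snd aF \<inter> S = {} \<and> norm (f m - comb f (fst aF) (snd aF)) < \<delta>"
    using density[OF fr d0] by fastforce
  then obtain aF where aF: "\<And>m. m \<in> T \<Longrightarrow> finite (snd (aF m)) \<and> snd (aF m) \<inter> S = {} \<and>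
      norm (f m - comb f (fst (aF m)) (snd (aF m))) < \<delta>"
    by metis
  define a where "a m = fst (aF m)" for m
  define F where "F m = snd (aF m)" for m
  have Ff: "finite (F m)" "F m \<inter> S = {}" "norm (f m - comb f (a m) (F m)) < \<delta>" if "m \<in> T" for m
    using aF[OF that] by (auto simp: a_def F_def)
  define g where "g m j = (if j \<in> F m then a m j else 0)" for m j
  obtain l where l: "\<exists>m\<in>T. l m \<noteq> 0" "\<forall>j\<in>{..<N}. (\<Sum>m\<in>T. l m * g m j) = 0"
    using lin_dep[of "{..<N}" T g] cT T(1) by auto
  define w1 where "w1 n = (if n \<in> T then l n else 0)" for n
  define w2 where "w2 n = (\<Sum>m\<in>T. l m * g m n)" for n
  define w where "w n = w1 n - w2 n" for n
  define Fa where "Fa = T \<union> (\<Union>m\<in>T. F m)"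
  have Faf: "finite Fa" using T(1) Ff(1) by (simp add: Fa_def)
  define F' where "F' = Fa - {..<N}"
  have F'f: "finite F'" using Faf by (simp add: F'_def)
  have wsmall: "w n = 0" if "n < N" for n
  proof -
    have "n \<notin> T" using T(3) that by auto
    thus ?thesis using l(2) that by (simp add: w_def w1_def w2_def)
  qed
  have wT: "w m = l m" if "m \<in> T" for m
  proof -
    have "g m' m = 0" if "m' \<in> T" for m'
      using Ff(2)[OF that] T(2) \<open>m \<in> T\<close> by (auto simp: g_def)
    hence "w2 m = 0" by (simp add: w2_def)
    thus ?thesis using that by (simp add: w_def w1_def)
  qed
  have cF': "comb f w Fa = comb f w F'"
    unfolding comb_def F'_def
    by (rule sum.mono_neutral_right) (use Faf wsmall in auto)
  have c1: "comb f w1 Fa = (\<Sum>m\<in>T. scaleC (l m) (f m))"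
    using comb_extend[of Fa T f l] Faf by (simp add: Fa_def w1_def comb_def)
  have c2: "comb f w2 Fa = (\<Sum>m\<in>T. scaleC (l m) (comb f (a m) (F m)))"
  proof -
    have "comb f w2 Fa = (\<Sum>n\<in>Fa. \<Sum>m\<in>T. scaleC (l m * g m n) (f n))"
      unfolding comb_def w2_def by (simp add: scaleC_sum_left)
    also have "\<dots> = (\<Sum>m\<in>T. \<Sum>n\<in>Fa. scaleC (l m) (scaleC (g m n) (f n)))"
      by (subst sum.swap) (simp add: scaleC_scaleC)
    also have "\<dots> = (\<Sum>m\<in>T. scaleC (l m) (comb f (g m) Fa))"
      by (simp add: comb_def scaleC_sum_right)
    also have "\<dots> = (\<Sum>m\<in>T. scaleC (l m) (comb f (a m) (F m)))"
    proof (rule sum.cong[OF refl])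
      fix m assume m: "m \<in> T"
      have "F m \<subseteq> Fa" using m by (auto simp: Fa_def)
      hence "comb f (a m) (F m) = comb f (g m) Fa"
      proof -
        have "g m = (\<lambda>j. if j \<in> F m then a m j else 0)" by (simp add: g_def fun_eq_iff)
        thus ?thesis using comb_extend[where F'=Fa and F="F m" and f=f and a="a m"] Faf \<open>F m \<subseteq> Fa\<close> by simp
      qed
      thus "scaleC (l m) (comb f (g m) Fa) = scaleC (l m) (comb f (a m) (F m))" by simp
    qed
    finally show ?thesis .
  qed
  have cw: "comb f w F' = (\<Sum>m\<in>T. scaleC (l m) (f m - comb f (a m) (F m)))"
    using cF' c1 c2 comb_diff_coef[of f w1 Fa w2]
    by (simp add: w_def[abs_def] scaleC_diff_right sum_subtractf)
  define P where "P = (\<Sum>m\<in>T. (cmod (l m))\<^sup>2)"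
  have P0: "0 < P"
  proof -
    from l(1) obtain m where "m \<in> T" "l m \<noteq> 0" by blast
    thus ?thesis unfolding P_def using T(1)
      by (intro sum_pos2[where i=m]) auto
  qed
  have "norm (comb f w F') \<le> (\<Sum>m\<in>T. cmod (l m) * \<delta>)"
    unfolding cw
    by (rule order_trans[OF norm_sum], rule sum_mono)
       (simp add: norm_scaleC mult_left_mono less_imp_le Ff(3))
  hence "(norm (comb f w F'))\<^sup>2 \<le> (\<Sum>m\<in>T. cmod (l m) * \<delta>)\<^sup>2"
    by (intro power_mono) auto
  also have "\<dots> = (\<Sum>m\<in>T. cmod (l m))\<^sup>2 * \<delta>\<^sup>2"
    by (simp add: sum_distrib_right[symmetric] power_mult_distrib)
  also have "\<dots> \<le> P * real k * \<delta>\<^sup>2"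
    using sum_squared_le_sum_of_squares[of "\<lambda>m. cmod (l m)" T]
    by (intro mult_right_mono) (auto simp: P_def k_def)
  also have "\<dots> = P * (c / 2)" using dsq by (simp add: mult.assoc mult.commute)
  finally have up: "(norm (comb f w F'))\<^sup>2 \<le> P * (c / 2)" .
  have "P = (\<Sum>n\<in>T. (cmod (w n))\<^sup>2)" unfolding P_def by (rule sum.cong) (auto simp: wT)
  also have "\<dots> \<le> (\<Sum>n\<in>F'. (cmod (w n))\<^sup>2)"
    by (rule sum_mono2[OF F'f]) (use T(3) in \<open>auto simp: F'_def Fa_def\<close>)
  finally have "c * P \<le> c * (\<Sum>n\<in>F'. (cmod (w n))\<^sup>2)"
    using c0 by (intro mult_left_mono) auto
  also have "\<dots> \<le> (norm (comb f w F'))\<^sup>2"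
    by (rule lowN[OF F'f]) (auto simp: F'_def)
  finally have "c * P \<le> (c * P) / 2" using up by (simp add: mult.commute)
  moreover have "0 < c * P" using P0 c0 by simp
  ultimately show False by linarith
qed


theorem proposition3p4:
  fixes f :: "nat \<Rightarrow> 'a::{complex_inner, complete_space}"
    and B :: real
  assumes "infinite_dimensional TYPE('a)"
    and "separable_hilbert TYPE('a)"
    and "frame f"
    and "B = optimal_upper_frame_bound f"
    and "summable (\<lambda>n. B - (norm (f n))\<^sup>2)"
  shows "near_riesz_basis f"
proof -
  have "\<exists>x::'a. x \<noteq> 0"
  proof (rule ccontr)
    assume "\<not> ?thesis"
    hence all0: "\<And>x::'a. x = 0" by simp
    have "cspan ({}::'a set) = UNIV"
      unfolding cspan_def by (auto intro!: exI[of _ "{}"] simp: all0[of "sum _ _"] intro: all0)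
    thus False using assms(1) unfolding infinite_dimensional_def by blast
  qed
  then obtain x0 :: 'a where x0: "x0 \<noteq> 0" by blast
  have Bpos: "0 < B" by (rule B_pos[OF assms(3) assms(4) x0])
  define q where "q n = B - (norm (f n))\<^sup>2" for n
  have q0: "0 \<le> q n" for n using norm_le_B[OF assms(3,4)] Bpos by (simp add: q_def less_imp_le)
  have qs: "summable q" using assms(5) by (simp add: q_def[abs_def])
  define \<eta> where "\<eta> = B / 16"
  have eta0: "0 < \<eta>" using Bpos by (simp add: \<eta>_def)
  obtain N where N: "\<And>m n. N \<le> m \<Longrightarrow> norm (sum q {m..<n}) < \<eta>"
    using qs eta0 unfolding summable_Cauchy by blast
  have tail: "sum q F \<le> \<eta>" if F: "finite F" "F \<subseteq> {N..}" for F
  proof (cases "F = {}")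
    case True thus ?thesis using eta0 by simp
  next
    case False
    have "F \<subseteq> {N..<Suc (Max F)}" using F False by (auto simp: less_Suc_eq_le)
    hence "sum q F \<le> sum q {N..<Suc (Max F)}" by (intro sum_mono2) (auto simp: q0)
    also have "\<dots> \<le> norm (sum q {N..<Suc (Max F)})" by simp
    also have "\<dots> < \<eta>" by (rule N) simp
    finally show ?thesis by simp
  qed
  define c where "c = 11 * B / 16"
  have c0: "0 < c" using Bpos by (simp add: c_def)
  have ceq: "B - \<eta> - sqrt (B * \<eta>) = c"
  proof -
    have "B * \<eta> = (B / 4)\<^sup>2" by (simp add: \<eta>_def power2_eq_square)
    hence "sqrt (B * \<eta>) = B / 4" using Bpos by simp
    thus ?thesis by (simp add: c_def \<eta>_def)
  qed
  have lowN: "c * (\<Sum>n\<in>F. (cmod (w n))\<^sup>2) \<le> (norm (comb f w F))\<^sup>2"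
    if "finite F" "F \<subseteq> {N..}" for F w
    using lower_comb[OF assms(3,4) less_imp_le[OF Bpos] that(1), of \<eta> w] tail[OF that] ceq
    by (simp add: q_def)
  show ?thesis
    unfolding near_riesz_basis_def
  proof (intro conjI exI[of _ "N + N"] allI impI)
    show "frame f" by (rule assms(3))
    fix S assume fr: "frame_on f (UNIV - S)"
    have bd: "card T \<le> N" if "finite T" "T \<subseteq> S \<inter> {N..}" for T
      using key[OF c0 lowN fr that(1)] that(2) by blast
    have fin: "finite (S \<inter> {N..})"
    proof (rule ccontr)
      assume "infinite (S \<inter> {N..})"
      from infinite_arbitrarily_large[OF this, of "Suc N"] obtain T where
        "finite T" "card T = Suc N" "T \<subseteq> S \<inter> {N..}" by blast
      thus False using bd by fastforce
    qed
    have c1: "card (S \<inter> {N..}) \<le> N" by (rule bd[OF fin]) simp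
    have sub: "S \<subseteq> {..<N} \<union> (S \<inter> {N..})" by auto
    have finS: "finite S" by (rule finite_subset[OF sub]) (use fin in auto)
    have "card S \<le> card ({..<N} \<union> (S \<inter> {N..}))" by (rule card_mono) (use fin sub in auto)
    also have "\<dots> \<le> card {..<N} + card (S \<inter> {N..})" by (rule card_Un_le)
    finally have cS: "card S \<le> N + N" using c1 by simp
    show "finite S" by (rule finS)
    show "card S \<le> N + N" by (rule cS)
  qed
qed


end
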